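(* Let $n\ge 4$ and for each $i\in[n]$ let $X_i$ be uniformly distributed on $[0,i]$, with arbitrary joint distribution. Then $$ \mathbb{E}\Big[\max\Big\{|A|: A\subset[n],\ \sum_{i\in A}X_i\le 1\Big\}\Big]\le (2H_n)^{1/2}, $$ where $H_n=\sum_{i=1}^n 1/i$ is the $n$-th harmonic number. *)

theory Defs
  imports "HOL-Probability.Probability" "HOL-Analysis.Harmonic_Numbers"
begin

definition max_packing :: "nat \<Rightarrow> (nat \<Rightarrow> real) \<Rightarrow> nat" where
  "max_packing n x = Max {card A | A. A \<subseteq> {1..n} \<and> (\<Sum>i\<in>A. x i) \<le> 1}"

end

theory Submission
  imports Defs
begin

lemma key_int:
  fixes l :: real and i :: nat
  assumes l: "l \<ge> 1" and i: "i \<ge> 1"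
  shows "(\<integral>\<^sup>+x. ennreal (max 0 (1 - l*x)) \<partial>uniform_measure lborel {0..real i}) = ennreal (1/(2*l*i))"
proof -
  have l0: "l > 0" using l by simp
  have "(\<integral>\<^sup>+x. ennreal (max 0 (1 - l*x)) \<partial>uniform_measure lborel {0..real i})
     = (\<integral>\<^sup>+x. ennreal (max 0 (1 - l*x)) * indicator {0..real i} x \<partial>lborel) / emeasure lborel {0..real i}"
    by (rule nn_integral_uniform_measure) auto
  also have "emeasure lborel {0..real i} = ennreal (real i)" by simp
  also have "(\<integral>\<^sup>+x. ennreal (max 0 (1 - l*x)) * indicator {0..real i} x \<partial>lborel)
      = (\<integral>\<^sup>+x. ennreal (1 - l*x) * indicator {0..1/l} x \<partial>lborel)"
  proof (rule nn_integral_cong)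
    fix x :: real
    have "1/l \<le> 1" using l by simp
    also have "1 \<le> real i" using i by simp
    finally have li: "1/l \<le> real i" .
    have e: "x \<le> 1/l \<longleftrightarrow> l*x \<le> 1" using l0 by (simp add: field_simps)
    show "ennreal (max 0 (1 - l*x)) * indicator {0..real i} x = ennreal (1 - l*x) * indicator {0..1/l} x"
      using li e by (auto simp: indicator_def ennreal_eq_0_iff)
  qed
  also have "\<dots> = ennreal (1/(2*l))"
  proof (rule nn_integral_has_integral_lebesgue')
    show "\<And>x. x \<in> {0..1/l} \<Longrightarrow> 0 \<le> 1 - l*x"
      using l0 by (auto simp: field_simps)
    have "((\<lambda>x. 1 - l*x) has_integral ((\<lambda>x. x - l*x^2/2) (1/l) - (\<lambda>x. x - l*x^2/2) 0)) {0..1/l}"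
      apply (rule fundamental_theorem_of_calculus)
       apply (use l0 in simp)
      apply (auto intro!: derivative_eq_intros simp: power2_eq_square)
      done
    moreover have "(\<lambda>x. x - l*x^2/2) (1/l) - (\<lambda>x. x - l*x^2/2) 0 = 1/(2*l)"
      using l0 by (simp add: field_simps power2_eq_square)
    ultimately show "((\<lambda>x. 1 - l*x) has_integral 1/(2*l)) {0..1/l}" by simp
  qed
  also have "ennreal (1/(2*l)) / ennreal (real i) = ennreal (1/(2*l*i))"
    using l0 i by (subst divide_ennreal) auto
  finally show ?thesis .
qed

theorem mainTheorem5:
  fixes M :: "'a measure" and X :: "nat \<Rightarrow> 'a \<Rightarrow> real" and n :: nat
  assumes "prob_space M"
    and "n \<ge> 4"
    and "\<And>i. i \<in> {1..n} \<Longrightarrow> X i \<in> borel_measurable M"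
    and "\<And>i. i \<in> {1..n} \<Longrightarrow> distr M lborel (X i) = uniform_measure lborel {0..real i}"
  shows "(\<integral>\<omega>. real (max_packing n (\<lambda>i. X i \<omega>)) \<partial>M) \<le> sqrt (2 * harm n)"
proof -
  interpret P: prob_space M by fact
  define H :: real where "H = harm n"
  have "harm 4 \<le> H" unfolding H_def using assms(2) by (rule harm_mono)
  moreover have "harm 4 = (25/12::real)" by (simp add: harm_def numeral_eq_Suc)
  ultimately have H2: "H \<ge> 2" by simp
  define l where "l = sqrt (H/2)"
  have l1: "l \<ge> 1" unfolding l_def using H2 by simp
  have l0: "l > 0" using l1 by simp
  have hi: "integrable M (\<lambda>\<omega>. max 0 (1 - l * X i \<omega>)) \<and>
      integral\<^sup>L M (\<lambda>\<omega>. max 0 (1 - l * X i \<omega>)) = 1/(2*l*i)" if i: "i \<in> {1..n}" for i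
  proof -
    have m: "X i \<in> borel_measurable M" using assms(3) i by blast
    have "(\<integral>\<^sup>+\<omega>. ennreal (max 0 (1 - l * X i \<omega>)) \<partial>M)
       = (\<integral>\<^sup>+x. ennreal (max 0 (1 - l*x)) \<partial>distr M lborel (X i))"
      using m by (subst nn_integral_distr) auto
    also have "\<dots> = ennreal (1/(2*l*i))"
      using assms(4)[OF i] key_int[OF l1, of i] i by simp
    finally have nn: "(\<integral>\<^sup>+\<omega>. ennreal (max 0 (1 - l * X i \<omega>)) \<partial>M) = ennreal (1/(2*l*i))" .
    have int: "integrable M (\<lambda>\<omega>. max 0 (1 - l * X i \<omega>))"
      by (rule integrableI_nn_integral_finite[OF _ _ nn]) (use m in auto)
    have "integral\<^sup>L M (\<lambda>\<omega>. max 0 (1 - l * X i \<omega>)) = enn2real (ennreal (1/(2*l*i)))"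
      by (subst integral_eq_nn_integral) (use int nn in auto)
    also have "\<dots> = 1/(2*l*i)" using l0 by simp
    finally show ?thesis using int by simp
  qed
  define g where "g \<omega> = l + (\<Sum>i=1..n. max 0 (1 - l * X i \<omega>))" for \<omega>
  have gint: "integrable M g" unfolding g_def
    by (intro Bochner_Integration.integrable_add Bochner_Integration.integrable_sum P.integrable_const)
       (use hi in auto)
  have "integral\<^sup>L M g = l + (\<Sum>i=1..n. 1/(2*l*i))"
  proof -
    have "integral\<^sup>L M g = integral\<^sup>L M (\<lambda>\<omega>. l) + integral\<^sup>L M (\<lambda>\<omega>. \<Sum>i=1..n. max 0 (1 - l * X i \<omega>))"
      unfolding g_def
      by (intro Bochner_Integration.integral_add Bochner_Integration.integrable_sum P.integrable_const)
         (use hi in auto)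
    also have "integral\<^sup>L M (\<lambda>\<omega>. \<Sum>i=1..n. max 0 (1 - l * X i \<omega>)) = (\<Sum>i=1..n. integral\<^sup>L M (\<lambda>\<omega>. max 0 (1 - l * X i \<omega>)))"
      by (intro Bochner_Integration.integral_sum) (use hi in auto)
    also have "\<dots> = (\<Sum>i=1..n. 1/(2*l*i))"
      by (intro sum.cong) (use hi in auto)
    finally show ?thesis using P.prob_space by simp
  qed
  also have "(\<Sum>i=1..n. 1/(2*l*i)) = H/(2*l)"
    unfolding H_def harm_def sum_divide_distrib
    by (rule sum.cong) (auto simp: field_simps)
  also have "l + H/(2*l) = sqrt (2*H)"
  proof -
    have "l*l = H/2" unfolding l_def using H2 by simp
    hence "l + H/(2*l) = 2*l" using l0 by (simp add: field_simps)
    also have "\<dots> = sqrt (2*H)"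
      by (rule real_sqrt_unique[symmetric]) (use \<open>l*l = H/2\<close> l0 in \<open>auto simp: power2_eq_square\<close>)
    finally show ?thesis .
  qed
  finally have gval: "integral\<^sup>L M g = sqrt (2*H)" .
  have bound: "real (max_packing n (\<lambda>i. X i \<omega>)) \<le> g \<omega>" for \<omega>
  proof -
    let ?S = "{card A | A. A \<subseteq> {1..n} \<and> (\<Sum>i\<in>A. X i \<omega>) \<le> 1}"
    have fin: "finite ?S"
    proof (rule finite_subset)
      show "?S \<subseteq> card ` Pow {1..n}" by blast
    qed simp
    have "0 \<in> ?S" by force
    hence ne: "?S \<noteq> {}" by blast
    have "\<forall>k\<in>?S. real k \<le> g \<omega>"
    proof
      fix k assume "k \<in> ?S"
      then obtain A where A: "k = card A" "A \<subseteq> {1..n}" "(\<Sum>i\<in>A. X i \<omega>) \<le> 1" by blast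
      have finA: "finite A" using A(2) finite_subset by blast
      have "real k = (\<Sum>i\<in>A. (1 - l * X i \<omega>)) + l * (\<Sum>i\<in>A. X i \<omega>)"
        using A(1) by (simp add: sum_subtractf sum_distrib_left)
      also have "\<dots> \<le> (\<Sum>i\<in>A. max 0 (1 - l * X i \<omega>)) + l"
        using A(3) l0 by (intro add_mono sum_mono) auto
      also have "(\<Sum>i\<in>A. max 0 (1 - l * X i \<omega>)) \<le> (\<Sum>i=1..n. max 0 (1 - l * X i \<omega>))"
        using A(2) by (intro sum_mono2) auto
      finally show "real k \<le> g \<omega>" unfolding g_def by simp
    qed
    moreover have "Max ?S \<in> ?S" using Max_in[OF fin ne] .
    ultimately have "real (Max ?S) \<le> g \<omega>" by blast
    thus ?thesis unfolding max_packing_def by simp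
  qed
  show ?thesis
  proof (cases "integrable M (\<lambda>\<omega>. real (max_packing n (\<lambda>i. X i \<omega>)))")
    case True
    have "(\<integral>\<omega>. real (max_packing n (\<lambda>i. X i \<omega>)) \<partial>M) \<le> integral\<^sup>L M g"
      by (rule integral_mono[OF True gint bound])
    thus ?thesis using gval H_def by simp
  next
    case False
    thus ?thesis by (simp add: not_integrable_integral_eq harm_nonneg)
  qed
qed

end
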